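(* Let $\{M_p\mid p\in P\}$ be a Morse decomposition of a multivector field on a finite simplicial complex $K$, and let $\sigma_1,\dots,\sigma_n$ and $\sigma'_1,\dots,\sigma'_n$ be two Morse fixed admissible enumerations of $K$, with filtered boundary matrices $A$ and $A'$. Let $S$ and $S'$ be the connection matrices output by ConMat on $A$ and $A'$ respectively. Then $S[i,j]=S'[i',j']$ whenever $i,j$ index rows/columns of $S$ and $\sigma'_{i'}=\sigma_i$, $\sigma'_{j'}=\sigma_j$ (in which case $i',j'$ index rows/columns of $S'$).
   Context: $K$ is a finite simplicial complex ($\tau\le\sigma$: $\tau$ is a face of $\sigma$; $\mathrm{cl}(\sigma)=\{\tau:\tau\le\sigma\}$). A multivector field $\mathcal V$ on $K$ is a partition of $K$ into convex sets $V$ (if $\sigma,\tau\in V$ and $\sigma\le\mu\le\tau$ then $\mu\in V$); $[\sigma]_{\mathcal V}$ is the part containing $\sigma$, $F_{\mathcal V}(\sigma)=[\sigma]_{\mathcal V}\cup\mathrm{cl}(\sigma)$, and a path is a sequence $\sigma_1,\dots,\sigma_r$ with $\sigma_k\in F_{\mathcal V}(\sigma_{k-1})$. A Morse decomposition indexed by a finite poset $(P,\le_P)$ is a partition $K=\bigsqcup_{p\in P}M_p$ such that every path from $M_p$ to $M_q$ has $q\le_P p$; $[\sigma]_P$ is the $p$ with $\sigma\in M_p$. An admissible enumeration is $\sigma_1,\dots,\sigma_n$ of all simplices of $K$ such that (a) for some linear extension $\le_{lin}$ of $\le_P$, $i\le j\Rightarrow[\sigma_i]_P\le_{lin}[\sigma_j]_P$;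 (b) if $\sigma_i$ is a proper face of $\sigma_j$ then $i<j$. Two admissible enumerations are Morse fixed if for every $p$ they induce the same order on $M_p$. The filtered boundary matrix is the $n\times n$ $\mathbb Z_2$-matrix with entry $(i,j)$ equal to $1$ iff $\sigma_i$ is a codimension-one face of $\sigma_j$; row/column $i$ represents $\sigma_i$. For a nonzero column $j$ of a matrix $B$, $\mathrm{low}_B(j)$ is the largest $i$ with $B[i,j]=1$. Column (and row) $j$ is homogeneous if nonzero and $\sigma_j$, $\sigma_{\mathrm{low}_B(j)}$ are in the same Morse set; then index $\mathrm{low}_B(j)$ is targetable. $J_h(B)$, $J_t(B)$: sets of homogeneous, targetable indices. Algorithm ConMat on $A$ (in place): for $j=1,\dots,n$: for $i=\mathrm{low}_A(j)$ down to $1$: if $A[i,j]=1$ and some column $s<j$ of the current matrix is homogeneous with $\mathrm{low}_A(s)=i$, add column $s$ to column $j$ (mod 2). With $A_{out}$ the result, let $J=\{1,\dots,n\}\setminus J_h(A_{out})\setminus J_t(A_{out})$; the output $S$ is the submatrix of $A_{out}$ on rows and columns in $J$. *)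

theory Defs
  imports Main
begin

definition simplicial_complex :: "'v set set \<Rightarrow> bool" where
  "simplicial_complex K \<longleftrightarrow> finite K \<and>
     (\<forall>\<sigma>\<in>K. finite \<sigma> \<and> \<sigma> \<noteq> {}) \<and>
     (\<forall>\<sigma>\<in>K. \<forall>\<tau>. \<tau> \<subseteq> \<sigma> \<and> \<tau> \<noteq> {} \<longrightarrow> \<tau> \<in> K)"

definition convex_set :: "'v set set \<Rightarrow> 'v set set \<Rightarrow> bool" where
  "convex_set K A \<longleftrightarrow> (\<forall>\<sigma>\<in>A. \<forall>\<tau>\<in>A. \<forall>\<mu>\<in>K. \<sigma> \<subseteq> \<mu> \<and> \<mu> \<subseteq> \<tau> \<longrightarrow> \<mu> \<in> A)"

definition multivector_field :: "'v set set \<Rightarrow> 'v set set set \<Rightarrow> bool" where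
  "multivector_field K \<V> \<longleftrightarrow>
     (\<forall>A\<in>\<V>. A \<noteq> {} \<and> A \<subseteq> K \<and> convex_set K A) \<and>
     (\<forall>A\<in>\<V>. \<forall>B\<in>\<V>. A \<noteq> B \<longrightarrow> A \<inter> B = {}) \<and>
     \<Union>\<V> = K"

definition mvf_F :: "'v set set \<Rightarrow> 'v set set set \<Rightarrow> 'v set \<Rightarrow> 'v set \<Rightarrow> bool" where
  "mvf_F K \<V> \<sigma> \<tau> \<longleftrightarrow> (\<exists>A\<in>\<V>. \<sigma> \<in> A \<and> \<tau> \<in> A) \<or> (\<tau> \<in> K \<and> \<tau> \<subseteq> \<sigma>)"

definition mvf_path :: "'v set set \<Rightarrow> 'v set set set \<Rightarrow> 'v set list \<Rightarrow> bool" where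
  "mvf_path K \<V> xs \<longleftrightarrow> xs \<noteq> [] \<and> set xs \<subseteq> K \<and>
     (\<forall>k. 0 < k \<and> k < length xs \<longrightarrow> mvf_F K \<V> (xs ! (k - 1)) (xs ! k))"

definition partial_order_on_set :: "'p set \<Rightarrow> ('p \<Rightarrow> 'p \<Rightarrow> bool) \<Rightarrow> bool" where
  "partial_order_on_set P le \<longleftrightarrow>
     (\<forall>p\<in>P. le p p) \<and>
     (\<forall>p\<in>P. \<forall>q\<in>P. le p q \<and> le q p \<longrightarrow> p = q) \<and>
     (\<forall>p\<in>P. \<forall>q\<in>P. \<forall>r\<in>P. le p q \<and> le q r \<longrightarrow> le p r)"

definition morse_decomposition ::
  "'v set set \<Rightarrow> 'v set set set \<Rightarrow> 'p set \<Rightarrow> ('p \<Rightarrow> 'p \<Rightarrow> bool) \<Rightarrow> ('p \<Rightarrow> 'v set set) \<Rightarrow> bool" where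
  "morse_decomposition K \<V> P le M \<longleftrightarrow>
     finite P \<and> partial_order_on_set P le \<and>
     (\<forall>p\<in>P. M p \<subseteq> K) \<and>
     (\<forall>p\<in>P. \<forall>q\<in>P. p \<noteq> q \<longrightarrow> M p \<inter> M q = {}) \<and>
     (\<Union>p\<in>P. M p) = K \<and>
     (\<forall>xs p q. mvf_path K \<V> xs \<and> p \<in> P \<and> q \<in> P \<and> hd xs \<in> M p \<and> last xs \<in> M q \<longrightarrow> le q p)"

definition linear_extension :: "'p set \<Rightarrow> ('p \<Rightarrow> 'p \<Rightarrow> bool) \<Rightarrow> ('p \<Rightarrow> 'p \<Rightarrow> bool) \<Rightarrow> bool" where
  "linear_extension P le lin \<longleftrightarrow> partial_order_on_set P lin \<and>
     (\<forall>p\<in>P. \<forall>q\<in>P. lin p q \<or> lin q p) \<and>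
     (\<forall>p\<in>P. \<forall>q\<in>P. le p q \<longrightarrow> lin p q)"

(* enumeration \<sigma>_1..\<sigma>_n is e restricted to {1..n}, n = card K *)
definition admissible_enum ::
  "'v set set \<Rightarrow> 'p set \<Rightarrow> ('p \<Rightarrow> 'p \<Rightarrow> bool) \<Rightarrow> ('p \<Rightarrow> 'v set set) \<Rightarrow> (nat \<Rightarrow> 'v set) \<Rightarrow> bool" where
  "admissible_enum K P le M e \<longleftrightarrow>
     bij_betw e {1..card K} K \<and>
     (\<exists>lin. linear_extension P le lin \<and>
        (\<forall>i\<in>{1..card K}. \<forall>j\<in>{1..card K}. \<forall>p\<in>P. \<forall>q\<in>P.
           i \<le> j \<and> e i \<in> M p \<and> e j \<in> M q \<longrightarrow> lin p q)) \<and>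
     (\<forall>i\<in>{1..card K}. \<forall>j\<in>{1..card K}. e i \<subset> e j \<longrightarrow> i < j)"

definition morse_fixed ::
  "'v set set \<Rightarrow> 'p set \<Rightarrow> ('p \<Rightarrow> 'v set set) \<Rightarrow> (nat \<Rightarrow> 'v set) \<Rightarrow> (nat \<Rightarrow> 'v set) \<Rightarrow> bool" where
  "morse_fixed K P M e e' \<longleftrightarrow>
     (\<forall>p\<in>P. \<forall>i\<in>{1..card K}. \<forall>j\<in>{1..card K}. \<forall>i'\<in>{1..card K}. \<forall>j'\<in>{1..card K}.
        e i \<in> M p \<and> e j \<in> M p \<and> e' i' = e i \<and> e' j' = e j \<longrightarrow> (i < j \<longleftrightarrow> i' < j'))"

(* Z_2 matrices as boolean-valued functions on index pairs (1-based, rows/cols in {1..n}) *)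
type_synonym z2mat = "nat \<Rightarrow> nat \<Rightarrow> bool"

definition bdry_matrix :: "nat \<Rightarrow> (nat \<Rightarrow> 'v set) \<Rightarrow> z2mat" where
  "bdry_matrix n e = (\<lambda>i j. i \<in> {1..n} \<and> j \<in> {1..n} \<and> e i \<subseteq> e j \<and> card (e i) + 1 = card (e j))"

definition low :: "nat \<Rightarrow> z2mat \<Rightarrow> nat \<Rightarrow> nat" where
  "low n B j = (if \<exists>i\<in>{1..n}. B i j then Max {i\<in>{1..n}. B i j} else 0)"

definition homogeneous ::
  "nat \<Rightarrow> 'p set \<Rightarrow> ('p \<Rightarrow> 'v set set) \<Rightarrow> (nat \<Rightarrow> 'v set) \<Rightarrow> z2mat \<Rightarrow> nat \<Rightarrow> bool" where
  "homogeneous n P M e B j \<longleftrightarrow> j \<in> {1..n} \<and> (\<exists>i\<in>{1..n}. B i j) \<and>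
     (\<exists>p\<in>P. e j \<in> M p \<and> e (low n B j) \<in> M p)"

definition J_h :: "nat \<Rightarrow> 'p set \<Rightarrow> ('p \<Rightarrow> 'v set set) \<Rightarrow> (nat \<Rightarrow> 'v set) \<Rightarrow> z2mat \<Rightarrow> nat set" where
  "J_h n P M e B = {j. homogeneous n P M e B j}"

definition J_t :: "nat \<Rightarrow> 'p set \<Rightarrow> ('p \<Rightarrow> 'v set set) \<Rightarrow> (nat \<Rightarrow> 'v set) \<Rightarrow> z2mat \<Rightarrow> nat set" where
  "J_t n P M e B = low n B ` {j. homogeneous n P M e B j}"

definition add_col :: "z2mat \<Rightarrow> nat \<Rightarrow> nat \<Rightarrow> z2mat" where
  "add_col B s j = (\<lambda>i k. if k = j then B i j \<noteq> B i s else B i k)"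

(* one inner step of ConMat at column j, row i; the (nondeterministic) choice of s is
   resolved by taking the least admissible s *)
definition conmat_step ::
  "nat \<Rightarrow> 'p set \<Rightarrow> ('p \<Rightarrow> 'v set set) \<Rightarrow> (nat \<Rightarrow> 'v set) \<Rightarrow> nat \<Rightarrow> z2mat \<Rightarrow> nat \<Rightarrow> z2mat" where
  "conmat_step n P M e j B i =
     (if B i j \<and> (\<exists>s. 1 \<le> s \<and> s < j \<and> homogeneous n P M e B s \<and> low n B s = i)
      then add_col B (LEAST s. 1 \<le> s \<and> s < j \<and> homogeneous n P M e B s \<and> low n B s = i) j
      else B)"

definition conmat_col ::
  "nat \<Rightarrow> 'p set \<Rightarrow> ('p \<Rightarrow> 'v set set) \<Rightarrow> (nat \<Rightarrow> 'v set) \<Rightarrow> z2mat \<Rightarrow> nat \<Rightarrow> z2mat" where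
  "conmat_col n P M e B j = foldl (conmat_step n P M e j) B (rev [1..<low n B j + 1])"

definition conmat_out ::
  "nat \<Rightarrow> 'p set \<Rightarrow> ('p \<Rightarrow> 'v set set) \<Rightarrow> (nat \<Rightarrow> 'v set) \<Rightarrow> z2mat \<Rightarrow> z2mat" where
  "conmat_out n P M e A = foldl (conmat_col n P M e) A [1..<n + 1]"

definition conmat_J ::
  "nat \<Rightarrow> 'p set \<Rightarrow> ('p \<Rightarrow> 'v set set) \<Rightarrow> (nat \<Rightarrow> 'v set) \<Rightarrow> z2mat \<Rightarrow> nat set" where
  "conmat_J n P M e A =
     (let B = conmat_out n P M e A in {1..n} - J_h n P M e B - J_t n P M e B)"

(* S = submatrix of A_out on rows/columns in J, indexed by the original indices in J *)
definition conmat_S ::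
  "nat \<Rightarrow> 'p set \<Rightarrow> ('p \<Rightarrow> 'v set set) \<Rightarrow> (nat \<Rightarrow> 'v set) \<Rightarrow> z2mat \<Rightarrow> z2mat" where
  "conmat_S n P M e A =
     (\<lambda>i j. if i \<in> conmat_J n P M e A \<and> j \<in> conmat_J n P M e A
            then conmat_out n P M e A i j else False)"

end

theory Submission
  imports Defs
begin

definition labS :: "'p set \<Rightarrow> ('p \<Rightarrow> 'v set set) \<Rightarrow> 'v set \<Rightarrow> 'p" where
  "labS P M \<sigma> = (THE p. p \<in> P \<and> \<sigma> \<in> M p)"

definition xsum :: "z2mat \<Rightarrow> nat set \<Rightarrow> nat \<Rightarrow> bool" where
  "xsum B T i = odd (card {s\<in>T. B i s})"

definition Bk :: "nat \<Rightarrow> 'p set \<Rightarrow> ('p \<Rightarrow> 'v set set) \<Rightarrow> (nat \<Rightarrow> 'v set) \<Rightarrow> z2mat \<Rightarrow> nat \<Rightarrow> z2mat" where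
  "Bk n P M e A k = foldl (conmat_col n P M e) A [1..<k+1]"

lemma labS_eq:
  assumes md: "morse_decomposition K V P le M" and "p \<in> P" and "\<sigma> \<in> M p"
  shows "labS P M \<sigma> = p"
proof -
  have d: "\<forall>p\<in>P. \<forall>q\<in>P. p \<noteq> q \<longrightarrow> M p \<inter> M q = {}" using md unfolding morse_decomposition_def by blast
  show ?thesis unfolding labS_def
    by (rule the_equality) (use assms d in blast)+
qed

lemma labS:
  assumes md: "morse_decomposition K V P le M" and "\<sigma> \<in> K"
  shows "labS P M \<sigma> \<in> P \<and> \<sigma> \<in> M (labS P M \<sigma>)"
proof -
  have "(\<Union>p\<in>P. M p) = K" using md unfolding morse_decomposition_def by blast
  then obtain p where "p \<in> P" "\<sigma> \<in> M p" using assms(2) by blast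
  then show ?thesis using labS_eq[OF md] by metis
qed

lemma low_props:
  assumes "\<exists>i\<in>{1..n}. B i j"
  shows "low n B j \<in> {1..n}" "B (low n B j) j" "\<And>r. r \<in> {1..n} \<Longrightarrow> B r j \<Longrightarrow> r \<le> low n B j"
proof -
  have fin: "finite {i\<in>{1..n}. B i j}" by simp
  have ne: "{i\<in>{1..n}. B i j} \<noteq> {}" using assms by blast
  have eq: "low n B j = Max {i\<in>{1..n}. B i j}" using assms unfolding low_def by simp
  have "Max {i\<in>{1..n}. B i j} \<in> {i\<in>{1..n}. B i j}" using Max_in[OF fin ne] .
  then show "low n B j \<in> {1..n}" "B (low n B j) j" using eq by auto
  show "\<And>r. r \<in> {1..n} \<Longrightarrow> B r j \<Longrightarrow> r \<le> low n B j" using eq fin by auto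
qed

lemma low_cong:
  assumes "\<And>i. B i s = B' i s"
  shows "low n B s = low n B' s" "homogeneous n P M e B s = homogeneous n P M e B' s"
  using assms unfolding low_def homogeneous_def by simp_all

lemma step_col: "k \<noteq> j \<Longrightarrow> conmat_step n P M e j B r i k = B i k"
  unfolding conmat_step_def add_col_def by auto

lemma foldl_step_col: "k \<noteq> j \<Longrightarrow> foldl (conmat_step n P M e j) B rs i k = B i k"
  by (induction rs arbitrary: B) (auto simp: step_col)

lemma col_col: "k \<noteq> j \<Longrightarrow> conmat_col n P M e B j i k = B i k"
  unfolding conmat_col_def by (rule foldl_step_col)

lemma Bk_Suc: "Bk n P M e A (Suc k) = conmat_col n P M e (Bk n P M e A k) (Suc k)"
  unfolding Bk_def by simp

lemma Bk_0: "Bk n P M e A 0 = A"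
  unfolding Bk_def by simp

lemma Bk_col: "Bk n P M e A k i c = (if 1 \<le> c \<and> c \<le> k then Bk n P M e A c i c else A i c)"
proof (induction k)
  case 0
  then show ?case by (simp add: Bk_0)
next
  case (Suc k)
  show ?case
  proof (cases "c = Suc k")
    case True
    then show ?thesis by simp
  next
    case False
    then have "Bk n P M e A (Suc k) i c = Bk n P M e A k i c"
      by (simp add: Bk_Suc col_col)
    then show ?thesis using Suc False by auto
  qed
qed

lemma out_Bk: "conmat_out n P M e A = Bk n P M e A n"
  unfolding conmat_out_def Bk_def by simp

lemma xsum_cong: "(\<And>s. s \<in> T \<Longrightarrow> B i s = B' i' s) \<Longrightarrow> xsum B T i = xsum B' T i'"
  unfolding xsum_def by (metis (no_types, lifting) Collect_cong)

lemma xsum_insert: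
  assumes "finite T"
  shows "xsum B (T - {s} \<union> ({s} - T)) i = (xsum B T i \<noteq> B i s)"
proof (cases "s \<in> T")
  case True
  have e: "T - {s} \<union> ({s} - T) = T - {s}" using True by auto
  have "{x\<in>T. B i x} = (if B i s then insert s {x\<in>T - {s}. B i x} else {x\<in>T - {s}. B i x})"
    using True by auto
  moreover have "finite {x\<in>T - {s}. B i x}" using assms by simp
  ultimately show ?thesis unfolding xsum_def e by auto
next
  case False
  have e: "T - {s} \<union> ({s} - T) = insert s T" using False by auto
  have "{x\<in>insert s T. B i x} = (if B i s then insert s {x\<in>T. B i x} else {x\<in>T. B i x})"
    by auto
  moreover have "finite {x\<in>T. B i x}" using assms by simp
  ultimately show ?thesis unfolding xsum_def e using False by auto
qed

lemma xsum_diff: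
  assumes "finite T1" "finite T2"
  shows "(xsum B T1 i \<noteq> xsum B T2 i) = xsum B ((T1 - T2) \<union> (T2 - T1)) i"
proof -
  let ?f = "\<lambda>T. card {s\<in>T. B i s}"
  have a: "?f T1 = ?f (T1 - T2) + ?f (T1 \<inter> T2)"
    using assms by (subst card_Un_disjoint[symmetric]) (auto intro: arg_cong[where f=card])
  have b: "?f T2 = ?f (T2 - T1) + ?f (T1 \<inter> T2)"
    using assms by (subst card_Un_disjoint[symmetric]) (auto intro: arg_cong[where f=card])
  have c: "?f ((T1 - T2) \<union> (T2 - T1)) = ?f (T1 - T2) + ?f (T2 - T1)"
    using assms by (subst card_Un_disjoint[symmetric]) (auto intro: arg_cong[where f=card])
  show ?thesis unfolding xsum_def using a b c by auto
qed


locale one_enum =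
  fixes K :: "'v set set" and V :: "'v set set set" and P :: "'p set"
    and le :: "'p \<Rightarrow> 'p \<Rightarrow> bool" and M :: "'p \<Rightarrow> 'v set set" and e :: "nat \<Rightarrow> 'v set"
  assumes md: "morse_decomposition K V P le M"
    and adm: "admissible_enum K P le M e"
begin

abbreviation "lab i \<equiv> labS P M (e i)"
abbreviation "AA \<equiv> bdry_matrix (card K) e"
abbreviation "FF \<equiv> conmat_out (card K) P M e AA"

lemma e_in: "i \<in> {1..card K} \<Longrightarrow> e i \<in> K"
  using adm unfolding admissible_enum_def by (meson bij_betw_apply)

lemma lab: "i \<in> {1..card K} \<Longrightarrow> lab i \<in> P \<and> e i \<in> M (lab i)"
  using labS[OF md e_in] by blast

lemma po: "partial_order_on_set P le"
  using md unfolding morse_decomposition_def by blast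

lemma le_trans: "p \<in> P \<Longrightarrow> q \<in> P \<Longrightarrow> r \<in> P \<Longrightarrow> le p q \<Longrightarrow> le q r \<Longrightarrow> le p r"
  using po unfolding partial_order_on_set_def by blast

lemma block:
  assumes "i \<in> {1..card K}" "j \<in> {1..card K}" "le (lab i) (lab j)" "lab i \<noteq> lab j"
  shows "i < j"
proof (rule ccontr)
  assume "\<not> i < j"
  then have ji: "j \<le> i" by simp
  obtain lin where lin: "linear_extension P le lin"
    and ord: "\<forall>i\<in>{1..card K}. \<forall>j\<in>{1..card K}. \<forall>p\<in>P. \<forall>q\<in>P.
           i \<le> j \<and> e i \<in> M p \<and> e j \<in> M q \<longrightarrow> lin p q"
    using adm unfolding admissible_enum_def by blast
  have "lin (lab j) (lab i)" using ord ji assms(1,2) lab[OF assms(1)] lab[OF assms(2)] by blast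
  moreover have "lin (lab i) (lab j)" using lin assms(3) lab[OF assms(1)] lab[OF assms(2)]
    unfolding linear_extension_def by blast
  ultimately have "lab i = lab j" using lin lab[OF assms(1)] lab[OF assms(2)]
    unfolding linear_extension_def partial_order_on_set_def by blast
  then show False using assms(4) by blast
qed

lemma face_le:
  assumes "i \<in> {1..card K}" "j \<in> {1..card K}" "AA i j"
  shows "le (lab i) (lab j)"
proof -
  have sub: "e i \<subseteq> e j" using assms(3) unfolding bdry_matrix_def by blast
  have "mvf_path K V [e j, e i]"
    unfolding mvf_path_def mvf_F_def using e_in[OF assms(1)] e_in[OF assms(2)] sub
    by (auto simp: less_Suc_eq)
  then show ?thesis using md lab[OF assms(1)] lab[OF assms(2)]
    unfolding morse_decomposition_def by fastforce
qed

lemma homog_iff: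
  "homogeneous (card K) P M e B j \<longleftrightarrow> j \<in> {1..card K} \<and> (\<exists>i\<in>{1..card K}. B i j) \<and>
     lab (low (card K) B j) = lab j"
proof
  assume h: "homogeneous (card K) P M e B j"
  then have j: "j \<in> {1..card K}" and ex: "\<exists>i\<in>{1..card K}. B i j"
    unfolding homogeneous_def by auto
  obtain p where p: "p \<in> P" "e j \<in> M p" "e (low (card K) B j) \<in> M p"
    using h unfolding homogeneous_def by blast
  show "j \<in> {1..card K} \<and> (\<exists>i\<in>{1..card K}. B i j) \<and> lab (low (card K) B j) = lab j"
    using j ex labS_eq[OF md p(1,2)] labS_eq[OF md p(1,3)] by simp
next
  assume a: "j \<in> {1..card K} \<and> (\<exists>i\<in>{1..card K}. B i j) \<and> lab (low (card K) B j) = lab j"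
  then have "low (card K) B j \<in> {1..card K}" using low_props(1) by blast
  then show "homogeneous (card K) P M e B j"
    unfolding homogeneous_def using a lab by metis
qed

abbreviation "nn \<equiv> card K"

definition Inv :: "nat \<Rightarrow> z2mat \<Rightarrow> nat \<Rightarrow> z2mat \<Rightarrow> bool" where
  "Inv j B m C \<longleftrightarrow> (\<forall>i k. k \<noteq> j \<longrightarrow> C i k = B i k) \<and>
   (\<forall>i\<in>{1..nn}. C i j \<longrightarrow> le (lab i) (lab j)) \<and>
   (\<exists>T. T \<subseteq> {s. 1 \<le> s \<and> s < j \<and> homogeneous nn P M e B s \<and> le (lab s) (lab j)} \<and> finite T \<and>
        (\<forall>i\<in>{1..nn}. C i j = (B i j \<noteq> xsum B T i))) \<and>
   (\<forall>r\<in>{1..nn}. m < r \<longrightarrow> C r j \<longrightarrow>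
        \<not> (\<exists>s. 1 \<le> s \<and> s < j \<and> homogeneous nn P M e B s \<and> low nn B s = r))"

lemma inv_step:
  assumes j: "j \<in> {1..nn}"
    and C1: "\<And>s i. 1 \<le> s \<Longrightarrow> s < j \<Longrightarrow> i \<in> {1..nn} \<Longrightarrow> B i s \<Longrightarrow> le (lab i) (lab s)"
    and inv: "Inv j B (Suc m) C"
  shows "Inv j B m (conmat_step nn P M e j C (Suc m))"
proof -
  let ?i = "Suc m"
  let ?H = "{s. 1 \<le> s \<and> s < j \<and> homogeneous nn P M e B s \<and> le (lab s) (lab j)}"
  note iv = inv[unfolded Inv_def]
  have ia: "\<forall>i k. k \<noteq> j \<longrightarrow> C i k = B i k" using iv by (rule conjunct1)
  have ib: "\<forall>i\<in>{1..nn}. C i j \<longrightarrow> le (lab i) (lab j)" using iv[THEN conjunct2] by (rule conjunct1)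
  have ic: "\<exists>T. T \<subseteq> ?H \<and> finite T \<and> (\<forall>i\<in>{1..nn}. C i j = (B i j \<noteq> xsum B T i))"
    using iv[THEN conjunct2, THEN conjunct2] by (rule conjunct1)
  have id: "\<forall>r\<in>{1..nn}. Suc m < r \<longrightarrow> C r j \<longrightarrow>
        \<not> (\<exists>s. 1 \<le> s \<and> s < j \<and> homogeneous nn P M e B s \<and> low nn B s = r)"
    using iv[THEN conjunct2, THEN conjunct2] by (rule conjunct2)
  have colk: "\<And>i k. k \<noteq> j \<Longrightarrow> C i k = B i k" using ia by blast
  have lb: "\<And>i. i \<in> {1..nn} \<Longrightarrow> C i j \<Longrightarrow> le (lab i) (lab j)" using ib by blast
  obtain T where T: "T \<subseteq> ?H" "finite T" "\<And>i. i \<in> {1..nn} \<Longrightarrow> C i j = (B i j \<noteq> xsum B T i)"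
    using ic by blast
  have dd: "\<And>r. r \<in> {1..nn} \<Longrightarrow> Suc m < r \<Longrightarrow> C r j \<Longrightarrow>
        \<not> (\<exists>s. 1 \<le> s \<and> s < j \<and> homogeneous nn P M e B s \<and> low nn B s = r)"
    using id by blast
  have hc: "\<And>s. s < j \<Longrightarrow> homogeneous nn P M e C s = homogeneous nn P M e B s"
    by (rule low_cong(2)) (simp add: colk)
  have lc: "\<And>s. s < j \<Longrightarrow> low nn C s = low nn B s"
    by (rule low_cong(1)) (simp add: colk)
  have labP: "\<And>i. i \<in> {1..nn} \<Longrightarrow> lab i \<in> P" using lab by blast
  show ?thesis
  proof (cases "C ?i j \<and> (\<exists>s. 1 \<le> s \<and> s < j \<and> homogeneous nn P M e C s \<and> low nn C s = ?i)")
    case True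
    have Cij: "C ?i j" using True by blast
    define s0 where "s0 = (LEAST s. 1 \<le> s \<and> s < j \<and> homogeneous nn P M e C s \<and> low nn C s = ?i)"
    have s0: "1 \<le> s0 \<and> s0 < j \<and> homogeneous nn P M e C s0 \<and> low nn C s0 = ?i"
      unfolding s0_def by (rule LeastI_ex) (use True in blast)
    have s0j: "s0 < j" "1 \<le> s0" using s0 by auto
    have s0B: "homogeneous nn P M e B s0" "low nn B s0 = ?i"
      using s0 hc[OF s0j(1)] lc[OF s0j(1)] by auto
    have step: "conmat_step nn P M e j C ?i = add_col C s0 j"
      unfolding conmat_step_def s0_def by (rule if_P[OF True])
    have hB: "s0 \<in> {1..nn}" "\<exists>i\<in>{1..nn}. B i s0" "lab (low nn B s0) = lab s0"
      using s0B(1) unfolding homog_iff by blast+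
    have iin: "?i \<in> {1..nn}" using low_props(1)[of nn B s0, OF hB(2)] s0B(2) by simp
    have Bi: "B ?i s0" using low_props(2)[of nn B s0, OF hB(2)] s0B(2) by simp
    have Babove: "\<And>r. r \<in> {1..nn} \<Longrightarrow> B r s0 \<Longrightarrow> r \<le> ?i"
      using low_props(3)[of nn B s0, OF hB(2)] s0B(2) by simp
    have Ci: "le (lab ?i) (lab j)" using lb[OF iin Cij] .
    have s0le: "le (lab s0) (lab j)" using Ci hB(3) s0B(2) by simp
    have newc: "\<And>r. add_col C s0 j r j = (C r j \<noteq> B r s0)"
      unfolding add_col_def using colk[of s0] s0j by simp
    have newk: "\<forall>r k. k \<noteq> j \<longrightarrow> add_col C s0 j r k = B r k"
      unfolding add_col_def using colk by simp
    have pa: "\<forall>i\<in>{1..nn}. add_col C s0 j i j \<longrightarrow> le (lab i) (lab j)"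
    proof (intro ballI impI)
      fix r assume r: "r \<in> {1..nn}" "add_col C s0 j r j"
      show "le (lab r) (lab j)"
      proof (cases "C r j")
        case True then show ?thesis using lb r by blast
      next
        case False
        then have "B r s0" using r newc by simp
        then have "le (lab r) (lab s0)" using C1 s0j r by blast
        then show ?thesis using le_trans[OF labP[OF r(1)] labP[OF hB(1)] labP[OF j]] s0le by blast
      qed
    qed
    have pc: "\<exists>T. T \<subseteq> ?H \<and> finite T \<and> (\<forall>i\<in>{1..nn}. add_col C s0 j i j = (B i j \<noteq> xsum B T i))"
    proof (intro exI conjI)
      show "T - {s0} \<union> ({s0} - T) \<subseteq> ?H" using T(1) s0j s0B s0le by auto
      show "finite (T - {s0} \<union> ({s0} - T))" using T(2) by simp
      show "\<forall>i\<in>{1..nn}. add_col C s0 j i j = (B i j \<noteq> xsum B (T - {s0} \<union> ({s0} - T)) i)"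
      proof
        fix i assume i: "i \<in> {1..nn}"
        show "add_col C s0 j i j = (B i j \<noteq> xsum B (T - {s0} \<union> ({s0} - T)) i)"
          unfolding newc xsum_insert[OF T(2)] T(3)[OF i] by blast
      qed
    qed
    have pd: "\<forall>r\<in>{1..nn}. m < r \<longrightarrow> add_col C s0 j r j \<longrightarrow>
        \<not> (\<exists>s. 1 \<le> s \<and> s < j \<and> homogeneous nn P M e B s \<and> low nn B s = r)"
    proof (intro ballI impI)
      fix r assume r: "r \<in> {1..nn}" "m < r" "add_col C s0 j r j"
      show "\<not> (\<exists>s. 1 \<le> s \<and> s < j \<and> homogeneous nn P M e B s \<and> low nn B s = r)"
      proof (cases "r = ?i")
        case True
        have "add_col C s0 j ?i j = False" using newc[of ?i] Bi Cij by simp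
        then have False using r(3) True by simp
        then show ?thesis ..
      next
        case False
        then have lt: "Suc m < r" using r(2) by simp
        have "\<not> B r s0" using Babove[OF r(1)] lt by auto
        then have "C r j" using r(3) newc[of r] by simp
        then show ?thesis using dd[OF r(1) lt] by blast
      qed
    qed
    show ?thesis unfolding step Inv_def by (intro conjI newk pa pc pd)
  next
    case False
    have step: "conmat_step nn P M e j C ?i = C"
      unfolding conmat_step_def by (rule if_not_P[OF False])
    have pd: "\<forall>r\<in>{1..nn}. m < r \<longrightarrow> C r j \<longrightarrow>
        \<not> (\<exists>s. 1 \<le> s \<and> s < j \<and> homogeneous nn P M e B s \<and> low nn B s = r)"
    proof (intro ballI impI notI)
      fix r assume r: "r \<in> {1..nn}" "m < r" "C r j"
        and ex: "\<exists>s. 1 \<le> s \<and> s < j \<and> homogeneous nn P M e B s \<and> low nn B s = r"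
      then obtain s where s: "1 \<le> s" "s < j" "homogeneous nn P M e B s" "low nn B s = r" by blast
      show False
      proof (cases "r = ?i")
        case True
        have "1 \<le> s \<and> s < j \<and> homogeneous nn P M e C s \<and> low nn C s = ?i"
          using s hc[OF s(2)] lc[OF s(2)] True by simp
        then show False using False r(3) True by blast
      next
        case False
        then have lt: "Suc m < r" using r(2) by simp
        show False using dd[OF r(1) lt r(3)] s by blast
      qed
    qed
    show ?thesis unfolding step Inv_def by (intro conjI ia ib ic pd)
  qed
qed

lemma inv_fold:
  assumes j: "j \<in> {1..nn}"
    and C1: "\<And>s i. 1 \<le> s \<Longrightarrow> s < j \<Longrightarrow> i \<in> {1..nn} \<Longrightarrow> B i s \<Longrightarrow> le (lab i) (lab s)"
  shows "Inv j B m C \<Longrightarrow> Inv j B 0 (foldl (conmat_step nn P M e j) C (rev [1..<m+1]))"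
proof (induction m arbitrary: C)
  case 0
  then show ?case by simp
next
  case (Suc m)
  have "rev [1..<Suc m + 1] = Suc m # rev [1..<m+1]" by simp
  then show ?case using Suc.IH inv_step[OF j C1 Suc.prems] by simp
qed

lemma inv_init:
  assumes "\<And>i. i \<in> {1..nn} \<Longrightarrow> B i j \<Longrightarrow> le (lab i) (lab j)"
  shows "Inv j B (low nn B j) B"
  unfolding Inv_def
proof (intro conjI)
  show "\<exists>T. T \<subseteq> {s. 1 \<le> s \<and> s < j \<and> homogeneous nn P M e B s \<and> le (lab s) (lab j)} \<and> finite T \<and>
        (\<forall>i\<in>{1..nn}. B i j = (B i j \<noteq> xsum B T i))"
    by (rule exI[of _ "{}"]) (simp add: xsum_def)
  show "\<forall>r\<in>{1..nn}. low nn B j < r \<longrightarrow> B r j \<longrightarrow>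
        \<not> (\<exists>s. 1 \<le> s \<and> s < j \<and> homogeneous nn P M e B s \<and> low nn B s = r)"
  proof (intro ballI impI notI)
    fix r assume r: "r \<in> {1..nn}" "low nn B j < r" "B r j"
    then have ex: "\<exists>i\<in>{1..nn}. B i j" by blast
    have "r \<le> low nn B j" using low_props(3)[of nn B j r] ex r(1) r(3) by blast
    then show False using r(2) by simp
  qed
  show "\<forall>i k. k \<noteq> j \<longrightarrow> B i k = B i k" by simp
  show "\<forall>i\<in>{1..nn}. B i j \<longrightarrow> le (lab i) (lab j)" using assms by blast
qed

theorem char:
  "j \<in> {1..nn} \<Longrightarrow> (\<forall>i\<in>{1..nn}. FF i j \<longrightarrow> le (lab i) (lab j)) \<and>
   (\<exists>T. T \<subseteq> {s. 1 \<le> s \<and> s < j \<and> homogeneous nn P M e FF s \<and> le (lab s) (lab j)} \<and> finite T \<and>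
        (\<forall>i\<in>{1..nn}. FF i j = (AA i j \<noteq> xsum FF T i))) \<and>
   (\<forall>s. 1 \<le> s \<and> s < j \<and> homogeneous nn P M e FF s \<longrightarrow> \<not> FF (low nn FF s) j)"
proof (induction j rule: less_induct)
  case (less j)
  define B where "B = Bk nn P M e AA (j - 1)"
  have FFc: "\<And>i c. 1 \<le> c \<Longrightarrow> c \<le> nn \<Longrightarrow> FF i c = Bk nn P M e AA c i c"
  proof -
    fix i c assume c: "1 \<le> c" "c \<le> nn"
    have "FF i c = Bk nn P M e AA nn i c" by (simp only: out_Bk)
    also have "\<dots> = (if 1 \<le> c \<and> c \<le> nn then Bk nn P M e AA c i c else AA i c)" by (rule Bk_col)
    also have "\<dots> = Bk nn P M e AA c i c" by (rule if_P) (use c in simp)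
    finally show "FF i c = Bk nn P M e AA c i c" .
  qed
  have Bc: "\<And>i c. 1 \<le> c \<Longrightarrow> c < j \<Longrightarrow> B i c = FF i c"
  proof -
    fix i c assume c: "1 \<le> c" "c < j"
    have cj: "1 \<le> c \<and> c \<le> j - 1" using c by linarith
    have "B i c = (if 1 \<le> c \<and> c \<le> j - 1 then Bk nn P M e AA c i c else AA i c)"
      unfolding B_def by (rule Bk_col)
    also have "\<dots> = Bk nn P M e AA c i c" by (rule if_P[OF cj])
    also have "\<dots> = FF i c" using FFc[of c i] c less.prems by simp
    finally show "B i c = FF i c" .
  qed
  have Bj: "\<And>i. B i j = AA i j"
  proof -
    have nj: "\<not> (1 \<le> j \<and> j \<le> j - 1)" using less.prems by auto
    show "\<And>i. B i j = AA i j" unfolding B_def by (subst Bk_col) (simp only: if_not_P[OF nj])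
  qed
  obtain k where jk: "j = Suc k" using less.prems by (cases j) auto
  have Bk_k: "B = Bk nn P M e AA k" unfolding B_def jk by simp
  have FFj: "\<And>i. FF i j = conmat_col nn P M e B j i j"
  proof -
    fix i
    have "FF i j = Bk nn P M e AA j i j" using FFc[of j i] less.prems by simp
    also have "\<dots> = conmat_col nn P M e B j i j" unfolding Bk_k jk by (rule fun_cong[OF fun_cong[OF Bk_Suc]])
    finally show "FF i j = conmat_col nn P M e B j i j" .
  qed
  have C1: "\<And>s i. 1 \<le> s \<Longrightarrow> s < j \<Longrightarrow> i \<in> {1..nn} \<Longrightarrow> B i s \<Longrightarrow> le (lab i) (lab s)"
  proof -
    fix s i assume s: "1 \<le> s" "s < j" and i: "i \<in> {1..nn}" and b: "B i s"
    have sn: "s \<in> {1..nn}" using s less.prems by simp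
    have "FF i s" using b Bc s by simp
    then show "le (lab i) (lab s)" using less.IH[OF s(2) sn] i by blast
  qed
  have init: "Inv j B (low nn B j) B"
  proof (rule inv_init)
    fix i assume i: "i \<in> {1..nn}" and b: "B i j"
    show "le (lab i) (lab j)" using face_le[OF i less.prems] b Bj by simp
  qed
  have fin: "Inv j B 0 (conmat_col nn P M e B j)"
    unfolding conmat_col_def by (rule inv_fold[OF less.prems C1 init])
  have hc: "\<And>s. 1 \<le> s \<Longrightarrow> s < j \<Longrightarrow> homogeneous nn P M e B s = homogeneous nn P M e FF s"
    by (rule low_cong(2)) (simp add: Bc)
  have lc: "\<And>s. 1 \<le> s \<Longrightarrow> s < j \<Longrightarrow> low nn B s = low nn FF s"
    by (rule low_cong(1)) (simp add: Bc)
  note fv = fin[unfolded Inv_def]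
  have fb: "\<forall>i\<in>{1..nn}. conmat_col nn P M e B j i j \<longrightarrow> le (lab i) (lab j)"
    using fv[THEN conjunct2] by (rule conjunct1)
  have fd: "\<forall>r\<in>{1..nn}. 0 < r \<longrightarrow> conmat_col nn P M e B j r j \<longrightarrow>
        \<not> (\<exists>s. 1 \<le> s \<and> s < j \<and> homogeneous nn P M e B s \<and> low nn B s = r)"
    using fv[THEN conjunct2, THEN conjunct2] by (rule conjunct2)
  have fc: "\<exists>T. T \<subseteq> {s. 1 \<le> s \<and> s < j \<and> homogeneous nn P M e B s \<and> le (lab s) (lab j)} \<and> finite T \<and>
        (\<forall>i\<in>{1..nn}. conmat_col nn P M e B j i j = (B i j \<noteq> xsum B T i))"
    using fv[THEN conjunct2, THEN conjunct2] by (rule conjunct1)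
  have p1: "\<forall>i\<in>{1..nn}. FF i j \<longrightarrow> le (lab i) (lab j)"
    using fb FFj by simp
  obtain T where T: "T \<subseteq> {s. 1 \<le> s \<and> s < j \<and> homogeneous nn P M e B s \<and> le (lab s) (lab j)}"
    "finite T" "\<And>i. i \<in> {1..nn} \<Longrightarrow> conmat_col nn P M e B j i j = (B i j \<noteq> xsum B T i)"
    using fc by blast
  have xe: "\<And>i. xsum B T i = xsum FF T i"
  proof (rule xsum_cong)
    fix i s assume "s \<in> T"
    then have "1 \<le> s" "s < j" using T(1) by auto
    then show "B i s = FF i s" by (rule Bc)
  qed
  have T2: "T \<subseteq> {s. 1 \<le> s \<and> s < j \<and> homogeneous nn P M e FF s \<and> le (lab s) (lab j)}"
  proof
    fix s assume "s \<in> T"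
    then have a: "1 \<le> s" "s < j" "homogeneous nn P M e B s" "le (lab s) (lab j)" using T(1) by auto
    have "homogeneous nn P M e FF s" using hc[OF a(1,2)] a(3) by simp
    then show "s \<in> {s. 1 \<le> s \<and> s < j \<and> homogeneous nn P M e FF s \<and> le (lab s) (lab j)}"
      using a by simp
  qed
  have T3: "\<forall>i\<in>{1..nn}. FF i j = (AA i j \<noteq> xsum FF T i)"
    using T(3) FFj Bj xe by simp
  have p2: "\<exists>T. T \<subseteq> {s. 1 \<le> s \<and> s < j \<and> homogeneous nn P M e FF s \<and> le (lab s) (lab j)} \<and> finite T \<and>
        (\<forall>i\<in>{1..nn}. FF i j = (AA i j \<noteq> xsum FF T i))"
    using T2 T(2) T3 by blast
  have p3: "\<forall>s. 1 \<le> s \<and> s < j \<and> homogeneous nn P M e FF s \<longrightarrow> \<not> FF (low nn FF s) j"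
  proof (intro allI impI)
    fix s assume s: "1 \<le> s \<and> s < j \<and> homogeneous nn P M e FF s"
    then have r: "low nn FF s \<in> {1..nn}" using homog_iff low_props(1) by blast
    have hb: "homogeneous nn P M e B s" "low nn B s = low nn FF s"
      using hc[of s] lc[of s] s by auto
    have "\<not> conmat_col nn P M e B j (low nn FF s) j"
    proof
      assume c: "conmat_col nn P M e B j (low nn FF s) j"
      have "0 < low nn FF s" using r by simp
      then have "\<not> (\<exists>s'. 1 \<le> s' \<and> s' < j \<and> homogeneous nn P M e B s' \<and> low nn B s' = low nn FF s)"
        using fd r c by blast
      moreover have "1 \<le> s \<and> s < j \<and> homogeneous nn P M e B s \<and> low nn B s = low nn FF s"
        using s hb by simp
      ultimately show False by blast
    qed
    then show "\<not> FF (low nn FF s) j" using FFj by simp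
  qed
  show ?case using p1 p2 p3 by blast
qed

end


lemma uniq:
  assumes H: "\<And>s. s \<in> H \<Longrightarrow> low n F s \<in> {1..n} \<and> F (low n F s) s \<and> (\<forall>r\<in>{1..n}. F r s \<longrightarrow> r \<le> low n F s)"
    and inj: "inj_on (low n F) H"
    and T: "T1 \<subseteq> H" "T2 \<subseteq> H" "finite T1" "finite T2"
    and x: "\<And>i. i \<in> {1..n} \<Longrightarrow> x i = (a i \<noteq> xsum F T1 i)"
    and y: "\<And>i. i \<in> {1..n} \<Longrightarrow> y i = (a i \<noteq> xsum F T2 i)"
    and xl: "\<And>s. s \<in> H \<Longrightarrow> \<not> x (low n F s)"
    and yl: "\<And>s. s \<in> H \<Longrightarrow> \<not> y (low n F s)"
  shows "T1 = T2"
proof (rule ccontr)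
  assume ne: "T1 \<noteq> T2"
  define D where "D = (T1 - T2) \<union> (T2 - T1)"
  have Dfin: "finite D" and Dne: "D \<noteq> {}" and DH: "D \<subseteq> H"
    using T ne unfolding D_def by auto
  obtain s0 where s0: "s0 \<in> D" "low n F s0 = Max (low n F ` D)"
    using Max_in[of "low n F ` D"] Dfin Dne by (metis (no_types, lifting) finite_imageI image_iff image_is_empty)
  have mx: "\<And>s. s \<in> D \<Longrightarrow> low n F s \<le> low n F s0"
    using s0(2) Dfin by simp
  define i0 where "i0 = low n F s0"
  have i0: "i0 \<in> {1..n}" "F i0 s0" using H[of s0] s0(1) DH unfolding i0_def by auto
  have single: "{s\<in>D. F i0 s} = {s0}"
  proof
    show "{s0} \<subseteq> {s\<in>D. F i0 s}" using s0(1) i0 by simp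
    show "{s\<in>D. F i0 s} \<subseteq> {s0}"
    proof
      fix s assume s: "s \<in> {s\<in>D. F i0 s}"
      show "s \<in> {s0}"
      proof (rule ccontr)
        assume "s \<notin> {s0}"
        then have "low n F s \<noteq> i0" using inj s s0(1) DH unfolding i0_def inj_on_def by blast
        moreover have "low n F s \<le> i0" using mx s unfolding i0_def by blast
        moreover have "i0 \<le> low n F s" using H[of s] s DH i0(1) by blast
        ultimately show False by simp
      qed
    qed
  qed
  have "xsum F D i0" unfolding xsum_def single by simp
  then have "xsum F T1 i0 \<noteq> xsum F T2 i0" using xsum_diff[OF T(3,4)] unfolding D_def by simp
  moreover have "\<not> x i0" "\<not> y i0" using xl yl s0(1) DH unfolding i0_def by auto
  ultimately show False using x[OF i0(1)] y[OF i0(1)] by simp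
qed

lemma homog_transport:
  assumes E: "one_enum K V P le M e" and E': "one_enum K V P le M e'"
    and mf: "morse_fixed K P M e e'"
    and pi: "\<And>i. i \<in> {1..card K} \<Longrightarrow> \<pi> i \<in> {1..card K} \<and> e' (\<pi> i) = e i"
    and pisurj: "\<And>i'. i' \<in> {1..card K} \<Longrightarrow> \<exists>i\<in>{1..card K}. \<pi> i = i'"
    and s: "s \<in> {1..card K}"
    and col: "\<And>i. i \<in> {1..card K} \<Longrightarrow> F i s = F' (\<pi> i) (\<pi> s)"
    and C1: "\<And>i. i \<in> {1..card K} \<Longrightarrow> F i s \<Longrightarrow> le (labS P M (e i)) (labS P M (e s))"
    and C1': "\<And>i. i \<in> {1..card K} \<Longrightarrow> F' i (\<pi> s) \<Longrightarrow> le (labS P M (e' i)) (labS P M (e' (\<pi> s)))"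
  shows "homogeneous (card K) P M e F s = homogeneous (card K) P M e' F' (\<pi> s)"
    and "homogeneous (card K) P M e F s \<Longrightarrow> \<pi> (low (card K) F s) = low (card K) F' (\<pi> s)"
proof -
  let ?n = "card K"
  have gen: "homogeneous ?n P M ee G c \<longleftrightarrow> (\<exists>i\<in>{1..?n}. G i c \<and> labS P M (ee i) = labS P M (ee c))"
    if EE: "one_enum K V P le M ee" and c: "c \<in> {1..?n}"
      and CC: "\<And>i. i \<in> {1..?n} \<Longrightarrow> G i c \<Longrightarrow> le (labS P M (ee i)) (labS P M (ee c))" for ee G c
  proof
    assume "homogeneous ?n P M ee G c"
    then show "\<exists>i\<in>{1..?n}. G i c \<and> labS P M (ee i) = labS P M (ee c)"
      using one_enum.homog_iff[OF EE] low_props(1,2) by metis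
  next
    assume "\<exists>i\<in>{1..?n}. G i c \<and> labS P M (ee i) = labS P M (ee c)"
    then obtain i where i: "i \<in> {1..?n}" "G i c" "labS P M (ee i) = labS P M (ee c)" by blast
    then have ex: "\<exists>i\<in>{1..?n}. G i c" by blast
    define l where "l = low ?n G c"
    have l: "l \<in> {1..?n}" "G l c" "i \<le> l" using low_props[of "card K" G c, OF ex] i unfolding l_def by auto
    have "labS P M (ee l) = labS P M (ee c)"
    proof (rule ccontr)
      assume nq: "labS P M (ee l) \<noteq> labS P M (ee c)"
      have "le (labS P M (ee l)) (labS P M (ee i))" using CC[OF l(1,2)] i(3) by simp
      then have "l < i" using one_enum.block[OF EE l(1) i(1)] nq i(3) by simp
      then show False using l(3) by simp
    qed
    then show "homogeneous ?n P M ee G c" using one_enum.homog_iff[OF EE] c ex unfolding l_def by blast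
  qed
  have ps: "\<pi> s \<in> {1..?n}" "e' (\<pi> s) = e s" using pi s by auto
  have h1: "homogeneous ?n P M e F s \<longleftrightarrow> (\<exists>i\<in>{1..?n}. F i s \<and> labS P M (e i) = labS P M (e s))"
    using gen[OF E s C1] .
  have h2: "homogeneous ?n P M e' F' (\<pi> s) \<longleftrightarrow> (\<exists>i\<in>{1..?n}. F' i (\<pi> s) \<and> labS P M (e' i) = labS P M (e' (\<pi> s)))"
    using gen[OF E' ps(1) C1'] .
  show eqh: "homogeneous ?n P M e F s = homogeneous ?n P M e' F' (\<pi> s)"
    unfolding h1 h2
  proof
    assume "\<exists>i\<in>{1..?n}. F i s \<and> labS P M (e i) = labS P M (e s)"
    then obtain i where "i \<in> {1..?n}" "F i s" "labS P M (e i) = labS P M (e s)" by blast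
    then show "\<exists>i\<in>{1..?n}. F' i (\<pi> s) \<and> labS P M (e' i) = labS P M (e' (\<pi> s))"
      using col pi ps by (intro bexI[of _ "\<pi> i"]) auto
  next
    assume "\<exists>i\<in>{1..?n}. F' i (\<pi> s) \<and> labS P M (e' i) = labS P M (e' (\<pi> s))"
    then obtain i' where i': "i' \<in> {1..?n}" "F' i' (\<pi> s)" "labS P M (e' i') = labS P M (e' (\<pi> s))" by blast
    obtain i where i: "i \<in> {1..?n}" "\<pi> i = i'" using pisurj[OF i'(1)] by blast
    show "\<exists>i\<in>{1..?n}. F i s \<and> labS P M (e i) = labS P M (e s)"
      using i i' col pi ps by (intro bexI[of _ i]) auto
  qed
  assume hs: "homogeneous ?n P M e F s"
  then have hs': "homogeneous ?n P M e' F' (\<pi> s)" using eqh by simp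
  define l where "l = low ?n F s"
  define l' where "l' = low ?n F' (\<pi> s)"
  have ex: "\<exists>i\<in>{1..?n}. F i s" and lab_l: "labS P M (e l) = labS P M (e s)"
    using one_enum.homog_iff[OF E] hs unfolding l_def by blast+
  have ex': "\<exists>i\<in>{1..?n}. F' i (\<pi> s)" and lab_l': "labS P M (e' l') = labS P M (e' (\<pi> s))"
    using one_enum.homog_iff[OF E'] hs' unfolding l'_def by blast+
  have l: "l \<in> {1..?n}" "F l s" "\<And>r. r \<in> {1..?n} \<Longrightarrow> F r s \<Longrightarrow> r \<le> l"
    using low_props[of "card K" F s, OF ex] unfolding l_def by auto
  have l': "l' \<in> {1..?n}" "F' l' (\<pi> s)" "\<And>r. r \<in> {1..?n} \<Longrightarrow> F' r (\<pi> s) \<Longrightarrow> r \<le> l'"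
    using low_props[of "card K" F' "\<pi> s", OF ex'] unfolding l'_def by auto
  obtain i where i: "i \<in> {1..?n}" "\<pi> i = l'" using pisurj[OF l'(1)] by blast
  have Fi: "F i s" using col[OF i(1)] i(2) l'(2) by simp
  have il: "i \<le> l" using l(3)[OF i(1) Fi] .
  have pl: "\<pi> l \<le> l'" using l'(3)[of "\<pi> l"] pi[OF l(1)] col[OF l(1)] l(2) by simp
  have labi: "labS P M (e i) = labS P M (e s)" using lab_l' i pi ps by metis
  have "i = l"
  proof (rule ccontr)
    assume "i \<noteq> l"
    then have "i < l" using il by simp
    moreover have "labS P M (e i) \<in> P" "e i \<in> M (labS P M (e i))" "e l \<in> M (labS P M (e i))"
      using one_enum.lab[OF E i(1)] one_enum.lab[OF E l(1)] labi lab_l by auto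
    ultimately have "\<pi> i < \<pi> l"
      using mf i(1) l(1) pi[OF i(1)] pi[OF l(1)] unfolding morse_fixed_def by blast
    then show False using pl i(2) by simp
  qed
  then show "\<pi> (low ?n F s) = low ?n F' (\<pi> s)" using i(2) unfolding l_def l'_def by simp
qed


theorem theorem3:
  fixes K :: "'v set set" and \<V> :: "'v set set set"
    and P :: "'p set" and le :: "'p \<Rightarrow> 'p \<Rightarrow> bool" and M :: "'p \<Rightarrow> 'v set set"
    and e e' :: "nat \<Rightarrow> 'v set" and i j i' j' :: nat
  assumes "simplicial_complex K"
    and "multivector_field K \<V>"
    and "morse_decomposition K \<V> P le M"
    and "admissible_enum K P le M e"
    and "admissible_enum K P le M e'"
    and "morse_fixed K P M e e'"
    and "i \<in> conmat_J (card K) P M e (bdry_matrix (card K) e)"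
    and "j \<in> conmat_J (card K) P M e (bdry_matrix (card K) e)"
    and "i' \<in> {1..card K}" and "j' \<in> {1..card K}"
    and "e' i' = e i" and "e' j' = e j"
  shows "i' \<in> conmat_J (card K) P M e' (bdry_matrix (card K) e') \<and>
         j' \<in> conmat_J (card K) P M e' (bdry_matrix (card K) e') \<and>
         conmat_S (card K) P M e (bdry_matrix (card K) e) i j =
         conmat_S (card K) P M e' (bdry_matrix (card K) e') i' j'"
proof -
  note md = assms(3) and mf = assms(6)
  have E: "one_enum K \<V> P le M e" unfolding one_enum_def using assms(3,4) by blast
  have E': "one_enum K \<V> P le M e'" unfolding one_enum_def using assms(3,5) by blast
  define A where "A = bdry_matrix (card K) e"
  define A' where "A' = bdry_matrix (card K) e'"
  define F where "F = conmat_out (card K) P M e A"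
  define F' where "F' = conmat_out (card K) P M e' A'"
  define lab where "lab = labS P M"
  have be: "bij_betw e {1..card K} K" using assms(4) unfolding admissible_enum_def by blast
  have be': "bij_betw e' {1..card K} K" using assms(5) unfolding admissible_enum_def by blast
  define \<pi> where "\<pi> i = inv_into {1..card K} e' (e i)" for i
  have pi: "\<And>i. i \<in> {1..card K} \<Longrightarrow> \<pi> i \<in> {1..card K} \<and> e' (\<pi> i) = e i"
  proof -
    fix i assume i: "i \<in> {1..card K}"
    have m: "e i \<in> e' ` {1..card K}" using be be' i by (metis bij_betw_apply bij_betw_imp_surj_on)
    have "\<pi> i \<in> {1..card K}" unfolding \<pi>_def by (rule inv_into_into[OF m])
    moreover have "e' (\<pi> i) = e i" unfolding \<pi>_def by (rule f_inv_into_f[OF m])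
    ultimately show "\<pi> i \<in> {1..card K} \<and> e' (\<pi> i) = e i" by blast
  qed
  have pi_inj: "\<And>a b. a \<in> {1..card K} \<Longrightarrow> b \<in> {1..card K} \<Longrightarrow> \<pi> a = \<pi> b \<Longrightarrow> a = b"
  proof -
    fix a b assume a: "a \<in> {1..card K}" and b: "b \<in> {1..card K}" and eq: "\<pi> a = \<pi> b"
    have "e a = e b" using pi[OF a] pi[OF b] eq by simp
    then show "a = b" using be a b unfolding bij_betw_def inj_on_def by blast
  qed
  have pisurj: "\<And>i'. i' \<in> {1..card K} \<Longrightarrow> \<exists>i\<in>{1..card K}. \<pi> i = i'"
  proof -
    fix i' assume i': "i' \<in> {1..card K}"
    have "e' i' \<in> e ` {1..card K}" using be be' i' by (metis bij_betw_apply bij_betw_imp_surj_on)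
    then obtain i where i: "i \<in> {1..card K}" "e i = e' i'" by blast
    have "\<pi> i = i'" unfolding \<pi>_def i(2) using be' i' by (simp add: bij_betw_def inv_into_f_f)
    then show "\<exists>i\<in>{1..card K}. \<pi> i = i'" using i by blast
  qed
  have lab_pi: "\<And>i. i \<in> {1..card K} \<Longrightarrow> lab (e' (\<pi> i)) = lab (e i)" using pi by simp
  have order: "\<And>s j. s \<in> {1..card K} \<Longrightarrow> j \<in> {1..card K} \<Longrightarrow> le (lab (e s)) (lab (e j)) \<Longrightarrow>
      (s < j \<longleftrightarrow> \<pi> s < \<pi> j)"
  proof -
    fix s j assume s: "s \<in> {1..card K}" and j: "j \<in> {1..card K}" and l: "le (lab (e s)) (lab (e j))"
    show "s < j \<longleftrightarrow> \<pi> s < \<pi> j"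
    proof (cases "lab (e s) = lab (e j)")
      case True
      have "lab (e j) \<in> P" "e j \<in> M (lab (e j))" "e s \<in> M (lab (e j))"
        using one_enum.lab[OF E j] one_enum.lab[OF E s] True unfolding lab_def by auto
      then show ?thesis using mf s j pi[OF s] pi[OF j] unfolding morse_fixed_def by blast
    next
      case False
      have "s < j" using one_enum.block[OF E s j] l False unfolding lab_def by simp
      moreover have "\<pi> s < \<pi> j" using one_enum.block[OF E' _ _] pi[OF s] pi[OF j] l False
        unfolding lab_def by simp
      ultimately show ?thesis by simp
    qed
  qed
  have char: "\<And>j. j \<in> {1..card K} \<Longrightarrow> (\<forall>i\<in>{1..card K}. F i j \<longrightarrow> le (lab (e i)) (lab (e j))) \<and>
   (\<exists>T. T \<subseteq> {s. 1 \<le> s \<and> s < j \<and> homogeneous (card K) P M e F s \<and> le (lab (e s)) (lab (e j))} \<and> finite T \<and>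
        (\<forall>i\<in>{1..card K}. F i j = (A i j \<noteq> xsum F T i))) \<and>
   (\<forall>s. 1 \<le> s \<and> s < j \<and> homogeneous (card K) P M e F s \<longrightarrow> \<not> F (low (card K) F s) j)"
    unfolding F_def A_def lab_def by (rule one_enum.char[OF E])
  have char': "\<And>j. j \<in> {1..card K} \<Longrightarrow> (\<forall>i\<in>{1..card K}. F' i j \<longrightarrow> le (lab (e' i)) (lab (e' j))) \<and>
   (\<exists>T. T \<subseteq> {s. 1 \<le> s \<and> s < j \<and> homogeneous (card K) P M e' F' s \<and> le (lab (e' s)) (lab (e' j))} \<and> finite T \<and>
        (\<forall>i\<in>{1..card K}. F' i j = (A' i j \<noteq> xsum F' T i))) \<and>
   (\<forall>s. 1 \<le> s \<and> s < j \<and> homogeneous (card K) P M e' F' s \<longrightarrow> \<not> F' (low (card K) F' s) j)"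
    unfolding F'_def A'_def lab_def by (rule one_enum.char[OF E'])
  have transp: "\<And>s. s \<in> {1..card K} \<Longrightarrow> (\<And>i. i \<in> {1..card K} \<Longrightarrow> F i s = F' (\<pi> i) (\<pi> s)) \<Longrightarrow>
      (homogeneous (card K) P M e F s = homogeneous (card K) P M e' F' (\<pi> s)) \<and>
      (homogeneous (card K) P M e F s \<longrightarrow> \<pi> (low (card K) F s) = low (card K) F' (\<pi> s))"
  proof -
    fix s assume s: "s \<in> {1..card K}" and col: "\<And>i. i \<in> {1..card K} \<Longrightarrow> F i s = F' (\<pi> i) (\<pi> s)"
    have C1: "\<And>i. i \<in> {1..card K} \<Longrightarrow> F i s \<Longrightarrow> le (labS P M (e i)) (labS P M (e s))"
      using char[OF s, THEN conjunct1] unfolding lab_def by blast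
    have C1': "\<And>i. i \<in> {1..card K} \<Longrightarrow> F' i (\<pi> s) \<Longrightarrow> le (labS P M (e' i)) (labS P M (e' (\<pi> s)))"
      using char'[OF pi[OF s, THEN conjunct1], THEN conjunct1] unfolding lab_def by blast
    show "(homogeneous (card K) P M e F s = homogeneous (card K) P M e' F' (\<pi> s)) \<and>
      (homogeneous (card K) P M e F s \<longrightarrow> \<pi> (low (card K) F s) = low (card K) F' (\<pi> s))"
      using homog_transport[where F=F and F'=F' and \<pi>=\<pi> and s=s, OF E E' mf pi pisurj s col C1 C1'] by blast
  qed
  have main: "\<forall>i\<in>{1..card K}. F i j = F' (\<pi> i) (\<pi> j)" if "j \<in> {1..card K}" for j
    using that
  proof (induction j rule: less_induct)
    case (less j)
    note jn = less.prems
    have colS: "\<And>s i. s \<in> {1..card K} \<Longrightarrow> s < j \<Longrightarrow> i \<in> {1..card K} \<Longrightarrow> F i s = F' (\<pi> i) (\<pi> s)"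
      using less.IH by blast
    have hom_s: "\<And>s. s \<in> {1..card K} \<Longrightarrow> s < j \<Longrightarrow>
      (homogeneous (card K) P M e F s = homogeneous (card K) P M e' F' (\<pi> s)) \<and>
      (homogeneous (card K) P M e F s \<longrightarrow> \<pi> (low (card K) F s) = low (card K) F' (\<pi> s))"
      using transp colS by blast
    define H where "H = {s. 1 \<le> s \<and> s < j \<and> homogeneous (card K) P M e F s \<and> le (lab (e s)) (lab (e j))}"
    obtain T where T: "T \<subseteq> H" "finite T" "\<And>i. i \<in> {1..card K} \<Longrightarrow> F i j = (A i j \<noteq> xsum F T i)"
      using char[OF jn, THEN conjunct2, THEN conjunct1] unfolding H_def by blast
    have c3: "\<And>s. 1 \<le> s \<Longrightarrow> s < j \<Longrightarrow> homogeneous (card K) P M e F s \<Longrightarrow> \<not> F (low (card K) F s) j"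
      using char[OF jn, THEN conjunct2, THEN conjunct2] by blast
    have pj: "\<pi> j \<in> {1..card K}" "e' (\<pi> j) = e j" using pi jn by auto
    obtain T' where T': "T' \<subseteq> {s. 1 \<le> s \<and> s < \<pi> j \<and> homogeneous (card K) P M e' F' s \<and> le (lab (e' s)) (lab (e' (\<pi> j)))}"
      "finite T'" "\<And>i. i \<in> {1..card K} \<Longrightarrow> F' i (\<pi> j) = (A' i (\<pi> j) \<noteq> xsum F' T' i)"
      using char'[OF pj(1), THEN conjunct2, THEN conjunct1] by blast
    have c3': "\<And>s. 1 \<le> s \<Longrightarrow> s < \<pi> j \<Longrightarrow> homogeneous (card K) P M e' F' s \<Longrightarrow> \<not> F' (low (card K) F' s) (\<pi> j)"
      using char'[OF pj(1), THEN conjunct2, THEN conjunct2] by blast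
    define T0 where "T0 = {s\<in>{1..card K}. \<pi> s \<in> T'}"
    have T0H: "T0 \<subseteq> H"
    proof
      fix s assume s0: "s \<in> T0"
      then have s: "s \<in> {1..card K}" and st: "\<pi> s \<in> T'" unfolding T0_def by auto
      have a: "\<pi> s < \<pi> j" "homogeneous (card K) P M e' F' (\<pi> s)" "le (lab (e' (\<pi> s))) (lab (e' (\<pi> j)))"
        using T'(1) st by auto
      have l: "le (lab (e s)) (lab (e j))" using a(3) pi[OF s] pj by simp
      have sj: "s < j" using order[OF s jn l] a(1) by simp
      have "homogeneous (card K) P M e F s" using hom_s[OF s sj] a(2) by simp
      then show "s \<in> H" unfolding H_def using s sj l by simp
    qed
    have T0fin: "finite T0" unfolding T0_def by simp
    have xs: "\<And>i. i \<in> {1..card K} \<Longrightarrow> xsum F' T' (\<pi> i) = xsum F T0 i"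
    proof -
      fix i assume i: "i \<in> {1..card K}"
      have seteq: "{s'\<in>T'. F' (\<pi> i) s'} = \<pi> ` {s\<in>T0. F i s}"
      proof
        show "\<pi> ` {s\<in>T0. F i s} \<subseteq> {s'\<in>T'. F' (\<pi> i) s'}"
        proof
          fix x assume "x \<in> \<pi> ` {s\<in>T0. F i s}"
          then obtain s where s: "s \<in> T0" "F i s" "x = \<pi> s" by blast
          have "s < j" "s \<in> {1..card K}" using s(1) T0H unfolding H_def T0_def by auto
          then show "x \<in> {s'\<in>T'. F' (\<pi> i) s'}" using s colS[of s i] i unfolding T0_def by auto
        qed
        show "{s'\<in>T'. F' (\<pi> i) s'} \<subseteq> \<pi> ` {s\<in>T0. F i s}"
        proof
          fix x assume x: "x \<in> {s'\<in>T'. F' (\<pi> i) s'}"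
          then have "x \<in> {1..card K}" using T'(1) pj(1) by auto
          then obtain s where s: "s \<in> {1..card K}" "\<pi> s = x" using pisurj by blast
          then have sT0: "s \<in> T0" using x unfolding T0_def by auto
          then have "s < j" using T0H unfolding H_def by auto
          then have "F i s" using colS[OF s(1) _ i] x s(2) by simp
          then show "x \<in> \<pi> ` {s\<in>T0. F i s}" using sT0 s(2) by blast
        qed
      qed
      have inj: "inj_on \<pi> {s\<in>T0. F i s}"
        using pi_inj unfolding inj_on_def T0_def by blast
      show "xsum F' T' (\<pi> i) = xsum F T0 i"
        unfolding xsum_def seteq card_image[OF inj] ..
    qed
    have Aeq: "\<And>i. i \<in> {1..card K} \<Longrightarrow> A' (\<pi> i) (\<pi> j) = A i j"
    proof -
      fix i assume i: "i \<in> {1..card K}"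
      show "A' (\<pi> i) (\<pi> j) = A i j"
        unfolding A_def A'_def bdry_matrix_def using pi[OF i] pj jn i by simp
    qed
    have yv: "\<And>i. i \<in> {1..card K} \<Longrightarrow> F' (\<pi> i) (\<pi> j) = (A i j \<noteq> xsum F T0 i)"
    proof -
      fix i assume i: "i \<in> {1..card K}"
      have "F' (\<pi> i) (\<pi> j) = (A' (\<pi> i) (\<pi> j) \<noteq> xsum F' T' (\<pi> i))"
        using T'(3) pi[OF i] by blast
      then show "F' (\<pi> i) (\<pi> j) = (A i j \<noteq> xsum F T0 i)" using Aeq[OF i] xs[OF i] by simp
    qed
    have Hp: "\<And>s. s \<in> H \<Longrightarrow> low (card K) F s \<in> {1..card K} \<and> F (low (card K) F s) s \<and>
         (\<forall>r\<in>{1..card K}. F r s \<longrightarrow> r \<le> low (card K) F s)"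
    proof -
      fix s assume sH: "s \<in> H"
      then have hs: "homogeneous (card K) P M e F s" unfolding H_def by blast
      have ex: "\<exists>i\<in>{1..card K}. F i s" using hs one_enum.homog_iff[OF E, of F s] by blast
      show "low (card K) F s \<in> {1..card K} \<and> F (low (card K) F s) s \<and>
         (\<forall>r\<in>{1..card K}. F r s \<longrightarrow> r \<le> low (card K) F s)"
        using low_props[of "card K" F s, OF ex] by blast
    qed
    have injH: "inj_on (low (card K) F) H"
    proof (rule inj_onI)
      fix a b assume a: "a \<in> H" and b: "b \<in> H" and eq: "low (card K) F a = low (card K) F b"
      show "a = b"
      proof (rule ccontr)
        assume "a \<noteq> b"
        then have "a < b \<or> b < a" by arith
        moreover have "a \<in> {1..card K}" "b \<in> {1..card K}" using a b jn unfolding H_def by auto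
        moreover have "homogeneous (card K) P M e F a" "homogeneous (card K) P M e F b" "1 \<le> a" "1 \<le> b"
          using a b unfolding H_def by auto
        ultimately show False
        proof (elim disjE)
          assume ab: "a < b"
          have "\<not> F (low (card K) F a) b"
            using char[OF \<open>b \<in> {1..card K}\<close>, THEN conjunct2, THEN conjunct2] ab
              \<open>1 \<le> a\<close> \<open>homogeneous (card K) P M e F a\<close> by blast
          then show False using Hp[OF b] eq by simp
        next
          assume ba: "b < a"
          have "\<not> F (low (card K) F b) a"
            using char[OF \<open>a \<in> {1..card K}\<close>, THEN conjunct2, THEN conjunct2] ba
              \<open>1 \<le> b\<close> \<open>homogeneous (card K) P M e F b\<close> by blast
          then show False using Hp[OF a] eq by simp
        qed
      qed
    qed
    have xl: "\<And>s. s \<in> H \<Longrightarrow> \<not> F (low (card K) F s) j"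
    proof -
      fix s assume "s \<in> H"
      then have "1 \<le> s" "s < j" "homogeneous (card K) P M e F s" unfolding H_def by auto
      then show "\<not> F (low (card K) F s) j" by (rule c3)
    qed
    have yl: "\<And>s. s \<in> H \<Longrightarrow> \<not> F' (\<pi> (low (card K) F s)) (\<pi> j)"
    proof -
      fix s assume sH: "s \<in> H"
      then have s: "s \<in> {1..card K}" "s < j" "homogeneous (card K) P M e F s" "le (lab (e s)) (lab (e j))"
        using jn unfolding H_def by auto
      have hs: "homogeneous (card K) P M e' F' (\<pi> s)" "\<pi> (low (card K) F s) = low (card K) F' (\<pi> s)"
        using hom_s[OF s(1,2)] s(3) by auto
      have "\<pi> s < \<pi> j" using order[OF s(1) jn s(4)] s(2) by simp
      moreover have "1 \<le> \<pi> s" using pi[OF s(1)] by simp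
      ultimately show "\<not> F' (\<pi> (low (card K) F s)) (\<pi> j)" using c3' hs by simp
    qed
    have "T = T0"
    proof (rule uniq[where H=H and n="card K" and F=F and a="\<lambda>i. A i j" and x="\<lambda>i. F i j"
          and y="\<lambda>i. F' (\<pi> i) (\<pi> j)", OF Hp injH T(1) T0H T(2) T0fin])
      show "\<And>i. i \<in> {1..card K} \<Longrightarrow> F i j = (A i j \<noteq> xsum F T i)" by (rule T(3))
      show "\<And>i. i \<in> {1..card K} \<Longrightarrow> F' (\<pi> i) (\<pi> j) = (A i j \<noteq> xsum F T0 i)" by (rule yv)
      show "\<And>s. s \<in> H \<Longrightarrow> \<not> F (low (card K) F s) j" by (rule xl)
      show "\<And>s. s \<in> H \<Longrightarrow> \<not> F' (\<pi> (low (card K) F s)) (\<pi> j)" by (rule yl)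
    qed
    then show ?case using T(3) yv by simp
  qed
  have ij: "i \<in> {1..card K}" "\<not> homogeneous (card K) P M e F i"
    "\<not> (\<exists>h. homogeneous (card K) P M e F h \<and> low (card K) F h = i)"
    using assms(7) unfolding conmat_J_def Let_def J_h_def J_t_def F_def A_def by auto
  have jj: "j \<in> {1..card K}" "\<not> homogeneous (card K) P M e F j"
    "\<not> (\<exists>h. homogeneous (card K) P M e F h \<and> low (card K) F h = j)"
    using assms(8) unfolding conmat_J_def Let_def J_h_def J_t_def F_def A_def by auto
  have inj': "inj_on e' {1..card K}" using be' unfolding bij_betw_def by blast
  have ipi: "i' = \<pi> i" using pi[OF ij(1)] assms(9,11) inj_onD[OF inj'] by metis
  have jpi: "j' = \<pi> j" using pi[OF jj(1)] assms(10,12) inj_onD[OF inj'] by metis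
  have inJ: "\<pi> c \<in> conmat_J (card K) P M e' A'"
    if c: "c \<in> {1..card K}" "\<not> homogeneous (card K) P M e F c"
      "\<not> (\<exists>h. homogeneous (card K) P M e F h \<and> low (card K) F h = c)" for c
  proof -
    have t: "homogeneous (card K) P M e F c = homogeneous (card K) P M e' F' (\<pi> c)"
      using transp[OF c(1)] main c(1) by blast
    have nt: "\<not> (\<exists>h'. homogeneous (card K) P M e' F' h' \<and> low (card K) F' h' = \<pi> c)"
    proof
      assume "\<exists>h'. homogeneous (card K) P M e' F' h' \<and> low (card K) F' h' = \<pi> c"
      then obtain h' where h': "homogeneous (card K) P M e' F' h'" "low (card K) F' h' = \<pi> c" by blast
      then have "h' \<in> {1..card K}" using one_enum.homog_iff[OF E'] by blast
      then obtain h where h: "h \<in> {1..card K}" "\<pi> h = h'" using pisurj by blast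
      have th: "homogeneous (card K) P M e F h" "\<pi> (low (card K) F h) = low (card K) F' h'"
        using transp[OF h(1)] main h h'(1) by auto
      have "low (card K) F h \<in> {1..card K}"
        using th(1) one_enum.homog_iff[OF E] low_props(1) by blast
      then have "low (card K) F h = c" using pi_inj c(1) th(2) h'(2) by simp
      then show False using c(3) th(1) by blast
    qed
    show ?thesis unfolding conmat_J_def Let_def J_h_def J_t_def F'_def[symmetric]
      using c(1,2) t nt pi[OF c(1)] by auto
  qed
  have i'J: "i' \<in> conmat_J (card K) P M e' A'" using inJ[OF ij] ipi by simp
  have j'J: "j' \<in> conmat_J (card K) P M e' A'" using inJ[OF jj] jpi by simp
  have "conmat_S (card K) P M e A i j = F i j"
    unfolding conmat_S_def F_def using assms(7,8) A_def by simp
  also have "\<dots> = F' i' j'" using main[OF jj(1)] ij(1) ipi jpi by simp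
  also have "\<dots> = conmat_S (card K) P M e' A' i' j'"
    unfolding conmat_S_def F'_def using i'J j'J by simp
  finally show ?thesis using i'J j'J unfolding A_def A'_def by simp
qed

end
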